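(* Let $a>1$, $d\ge 4$, and let $G$ be generated by the security model $\mathcal{S}(n,a,d)$. Let $\delta_1=\frac{10}{\log^{a-1}n}$ and $T_2=(1-\delta_1)n$. Then with probability $1-o(1)$ both of the following hold: (1) every homochromatic set whose seed node was created at a time step $\le T_2$ has size at least $\log n$; (2) every homochromatic set whose seed node was created at a time step $>T_2$ has size at most $30\log n$.
   Context: Security model $\mathcal{S}(n,a,d)$ (homophyly exponent $a$, natural number $d$): start with an initial graph $G_2$ on two nodes, each of which is a seed node with its own distinct color. For $i=3,\dots,n$, given $G_{i-1}$, let $p_i=(\log i)^{-a}$ and create a new node $v$ (at time step $i$). With probability $p_i$, $v$ receives a brand-new color $c$ and is called the seed node of $c$; then one edge $(v,u)$ is added with $u$ chosen with probability proportional to degrees in $G_{i-1}$, and $d-1$ edges $(v,u_j)$ are added, each $u_j$ chosen uniformly at random among all seed nodes of $G_{i-1}$. Otherwise, $v$ picks a color $c$ uniformly at random among all colors present in $G_{i-1}$, takes color $c$, and $d$ edges $(v,u_j)$ are added, each $u_j$ chosen with probability proportional to degree among the nodes of color $c$ in $G_{i-1}$. The network is $G=G_n$. A homochromatic set is the set of all nodes of $G$ of one color; it is created at the time step its seed node is created. *)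

theory Defs
  imports "HOL-Probability.Probability"
begin

text \<open>Nodes are the natural numbers 1..i (node v is created at
time step v).  A color is identified with (the index of) its seed node, so the seed nodes of a
state at time i are exactly the nodes v in 1..i with col v = v.  The graph is a multigraph given
by the multiset of its edges; degree-proportional choice is uniform choice from the multiset of
edge endpoints (each node occurs there as often as its degree).\<close>

type_synonym sstate = "(nat \<Rightarrow> nat) \<times> (nat \<times> nat) multiset"

definition endpoints :: "(nat \<times> nat) multiset \<Rightarrow> nat multiset" where
  "endpoints E = sum_mset (image_mset (\<lambda>(x, y). {#x, y#}) E)"

definition seeds :: "nat \<Rightarrow> (nat \<Rightarrow> nat) \<Rightarrow> nat set" where
  "seeds i col = {v \<in> {1..i}. col v = v}"

definition sec_p :: "real \<Rightarrow> nat \<Rightarrow> real" where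
  "sec_p a i = (ln (real i)) powr (- a)"

definition sec_init :: sstate where
  "sec_init = ((\<lambda>x. x), {#(1, 2)#})"

definition sec_step :: "real \<Rightarrow> nat \<Rightarrow> nat \<Rightarrow> sstate \<Rightarrow> sstate pmf" where
  "sec_step a d i s = (case s of (col, E) \<Rightarrow>
     bind_pmf (bernoulli_pmf (sec_p a i)) (\<lambda>b.
       if b then
         bind_pmf (pmf_of_multiset (endpoints E)) (\<lambda>u.
         bind_pmf (replicate_pmf (d - 1) (pmf_of_set (seeds (i - 1) col))) (\<lambda>us.
           return_pmf (col(i := i), E + {#(i, u)#} + mset (map (\<lambda>w. (i, w)) us))))
       else
         bind_pmf (pmf_of_set (seeds (i - 1) col)) (\<lambda>c.
         bind_pmf (replicate_pmf d
                     (pmf_of_multiset (filter_mset (\<lambda>x. col x = c) (endpoints E)))) (\<lambda>us.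
           return_pmf (col(i := c), E + mset (map (\<lambda>w. (i, w)) us))))))"

fun sec_model :: "real \<Rightarrow> nat \<Rightarrow> nat \<Rightarrow> sstate pmf" where
  "sec_model a d 0 = return_pmf sec_init"
| "sec_model a d (Suc m) =
     (if Suc m \<le> 2 then return_pmf sec_init
      else bind_pmf (sec_model a d m) (sec_step a d (Suc m)))"

definition homochromatic :: "nat \<Rightarrow> (nat \<Rightarrow> nat) \<Rightarrow> nat \<Rightarrow> nat set" where
  "homochromatic n col c = {v \<in> {1..n}. col v = c}"

definition delta1 :: "real \<Rightarrow> nat \<Rightarrow> real" where
  "delta1 a n = 10 / (ln (real n)) powr (a - 1)"

definition T2 :: "real \<Rightarrow> nat \<Rightarrow> real" where
  "T2 a n = (1 - delta1 a n) * real n"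

definition lemma4_event :: "real \<Rightarrow> nat \<Rightarrow> sstate set" where
  "lemma4_event a n = {(col, E).
     (\<forall>c \<in> seeds n col. real c \<le> T2 a n \<longrightarrow> real (card (homochromatic n col c)) \<ge> ln (real n)) \<and>
     (\<forall>c \<in> seeds n col. real c > T2 a n \<longrightarrow> real (card (homochromatic n col c)) \<le> 30 * ln (real n))}"

end

theory Submission
  imports Defs "HOL-Real_Asymp.Real_Asymp"
begin


definition colstep :: "real \<Rightarrow> nat \<Rightarrow> (nat \<Rightarrow> nat) \<Rightarrow> (nat \<Rightarrow> nat) pmf" where
  "colstep a i col = bind_pmf (bernoulli_pmf (sec_p a i)) (\<lambda>b.
     if b then return_pmf (col(i := i))
     else bind_pmf (pmf_of_set (seeds (i - 1) col)) (\<lambda>c. return_pmf (col(i := c))))"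

fun colmodel :: "real \<Rightarrow> nat \<Rightarrow> (nat \<Rightarrow> nat) pmf" where
  "colmodel a 0 = return_pmf (\<lambda>x. x)"
| "colmodel a (Suc m) = (if Suc m \<le> 2 then return_pmf (\<lambda>x. x) else bind_pmf (colmodel a m) (colstep a (Suc m)))"

lemma map_step: "map_pmf fst (sec_step a d i s) = colstep a i (fst s)"
  by (cases s) (simp add: sec_step_def colstep_def map_bind_pmf if_distrib cong: if_cong)

lemma marg: "map_pmf fst (sec_model a d n) = colmodel a n"
proof (induction n)
  case 0 then show ?case by (simp add: sec_init_def)
next
  case (Suc n)
  show ?case using Suc by (simp add: sec_init_def map_bind_pmf map_step bind_map_pmf[symmetric])
qed




lemma E_bind:
  fixes h :: "'b \<Rightarrow> real"
  assumes "finite (set_pmf M)" "\<And>x. x \<in> set_pmf M \<Longrightarrow> finite (set_pmf (f x))"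
  shows "measure_pmf.expectation (bind_pmf M f) h = measure_pmf.expectation M (\<lambda>x. measure_pmf.expectation (f x) h)"
proof -
  have "measure_pmf.expectation (bind_pmf M f) h = (\<Sum>a\<in>set_pmf M. pmf M a *\<^sub>R measure_pmf.expectation (f a) h)"
    using assms by (intro pmf_expectation_bind) auto
  also have "\<dots> = measure_pmf.expectation M (\<lambda>x. measure_pmf.expectation (f x) h)"
    using assms by (subst integral_measure_pmf[of "set_pmf M"]) auto
  finally show ?thesis .
qed




definition K :: "nat \<Rightarrow> (nat \<Rightarrow> nat) \<Rightarrow> nat" where
  "K i col = card (seeds i col)"

definition X :: "nat \<Rightarrow> nat \<Rightarrow> (nat \<Rightarrow> nat) \<Rightarrow> nat" where
  "X i c col = card {v \<in> {1..i}. col v = c}"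

lemma finite_seeds[simp]: "finite (seeds i col)"
  by (simp add: seeds_def)

lemma seeds_upd_lt: "j < i \<Longrightarrow> seeds j (col(i := x)) = seeds j col"
  by (auto simp: seeds_def)

lemma seeds_upd_new: "i \<ge> 1 \<Longrightarrow> seeds i (col(i := i)) = insert i (seeds (i - 1) col)"
  by (auto simp: seeds_def)

lemma seeds_upd_old: "i \<ge> 1 \<Longrightarrow> x \<noteq> i \<Longrightarrow> seeds i (col(i := x)) = seeds (i - 1) col"
  by (auto simp: seeds_def)

lemma i_notin_seeds: "i \<notin> seeds (i - 1) col"
  by (auto simp: seeds_def)

lemma K_upd: "i \<ge> 1 \<Longrightarrow> K i (col(i := x)) = K (i - 1) col + (if x = i then 1 else 0)"
proof -
  assume i: "i \<ge> 1"
  show ?thesis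
  proof (cases "x = i")
    case True
    then show ?thesis using i i_notin_seeds[of i col]
      by (simp add: K_def seeds_upd_new)
  next
    case False
    then show ?thesis using i by (simp add: K_def seeds_upd_old)
  qed
qed

lemma X_upd: "i \<ge> 1 \<Longrightarrow> X i c (col(i := x)) = X (i - 1) c col + (if x = c then 1 else 0)"
proof -
  assume i: "i \<ge> 1"
  let ?A = "{v \<in> {1..i-1}. col v = c}"
  have fin: "finite ?A" by simp
  have ni: "i \<notin> ?A" by auto
  show ?thesis
  proof (cases "x = c")
    case True
    then have "{v \<in> {1..i}. (col(i := x)) v = c} = insert i ?A" using i by auto
    then show ?thesis using True fin ni by (simp add: X_def)
  next
    case False
    then have "{v \<in> {1..i}. (col(i := x)) v = c} = ?A" using i by auto
    then show ?thesis using False by (simp add: X_def)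
  qed
qed

lemma ln_ge1: "i \<ge> 3 \<Longrightarrow> ln (real i) \<ge> 1"
proof -
  assume "i \<ge> 3"
  then have "(3::real) \<le> real i" by simp
  moreover have "exp 1 \<le> (3::real)" by (rule exp_le)
  ultimately have e: "exp 1 \<le> real i" by linarith
  have "ln (exp 1) \<le> ln (real i)"
    by (rule ln_mono[OF e]) auto
  then show ?thesis by simp
qed

lemma sec_p_bounds:
  assumes "a > 0" "i \<ge> 3"
  shows "0 \<le> sec_p a i" "sec_p a i \<le> 1"
proof -
  have l: "ln (real i) \<ge> 1" using assms(2) by (rule ln_ge1)
  show "0 \<le> sec_p a i" by (simp add: sec_p_def)
  have "ln (real i) powr (-a) \<le> ln (real i) powr 0"
    by (rule powr_mono) (use l assms in auto)
  then show "sec_p a i \<le> 1" unfolding sec_p_def using l by simp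
qed

definition cinv :: "(nat \<Rightarrow> nat) \<Rightarrow> bool" where
  "cinv col \<longleftrightarrow> col 1 = 1 \<and> (\<forall>v. col v \<le> v)"

lemma one_in_seeds: "i \<ge> 1 \<Longrightarrow> col 1 = 1 \<Longrightarrow> 1 \<in> seeds i col"
  by (simp add: seeds_def)

lemma seeds_ne: "i \<ge> 2 \<Longrightarrow> col 1 = 1 \<Longrightarrow> seeds (i - 1) col \<noteq> {}"
proof -
  assume "i \<ge> 2" "col 1 = 1"
  moreover have "i - 1 \<ge> 1" using \<open>i \<ge> 2\<close> by arith
  ultimately have "1 \<in> seeds (i - 1) col" using one_in_seeds[of "i - 1" col] by blast
  then show ?thesis by blast
qed

lemma colstep_support:
  assumes "i \<ge> 2" "col 1 = 1" "col' \<in> set_pmf (colstep a i col)"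
  shows "col' = col(i := i) \<or> (\<exists>c\<in>seeds (i - 1) col. col' = col(i := c))"
  using assms(3) seeds_ne[of i col, OF assms(1,2)]
  by (auto simp: colstep_def split: if_splits)

lemma colstep_finite:
  assumes "i \<ge> 2" "col 1 = 1"
  shows "finite (set_pmf (colstep a i col))"
proof -
  have "set_pmf (colstep a i col) \<subseteq> insert (col(i := i)) ((\<lambda>c. col(i := c)) ` seeds (i - 1) col)"
    using colstep_support[of i col, OF assms] by blast
  then show ?thesis by (rule finite_subset) simp
qed

lemma colstep_inv:
  assumes "i \<ge> 2" "cinv col" "col' \<in> set_pmf (colstep a i col)"
  shows "cinv col'"
proof -
  have c1: "col 1 = 1" using assms(2) by (simp add: cinv_def)
  from colstep_support[of i col, OF assms(1) c1 assms(3)] show ?thesis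
  proof
    assume "col' = col(i := i)"
    then show ?thesis using assms(1,2) by (auto simp: cinv_def)
  next
    assume "\<exists>c\<in>seeds (i - 1) col. col' = col(i := c)"
    then obtain c where c: "c \<in> seeds (i - 1) col" "col' = col(i := c)" by blast
    then have "c \<le> i" by (auto simp: seeds_def)
    then show ?thesis using c assms(1,2) by (auto simp: cinv_def)
  qed
qed

lemma colmodel_inv_fin:
  "(\<forall>col \<in> set_pmf (colmodel a n). cinv col) \<and> finite (set_pmf (colmodel a n))"
proof (induction n)
  case 0 then show ?case by (simp add: cinv_def)
next
  case (Suc n)
  show ?case
  proof (cases "Suc n \<le> 2")
    case True then show ?thesis by (simp add: cinv_def)
  next
    case False
    then have i: "Suc n \<ge> 2" by simp
    have fin: "\<And>col. col \<in> set_pmf (colmodel a n) \<Longrightarrow> finite (set_pmf (colstep a (Suc n) col))"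
      using Suc.IH colstep_finite[OF i] by (auto simp: cinv_def)
    have "\<forall>col \<in> set_pmf (colmodel a (Suc n)). cinv col"
      using False Suc.IH colstep_inv[OF i] by auto
    moreover have "finite (set_pmf (colmodel a (Suc n)))"
      using False Suc.IH fin by auto
    ultimately show ?thesis by blast
  qed
qed

lemma colmodel_inv: "col \<in> set_pmf (colmodel a n) \<Longrightarrow> cinv col"
  using colmodel_inv_fin by blast

lemma colmodel_fin: "finite (set_pmf (colmodel a n))"
  using colmodel_inv_fin by blast

lemma E_model_step:
  fixes h :: "(nat \<Rightarrow> nat) \<Rightarrow> real"
  assumes "m \<ge> 2"
  shows "measure_pmf.expectation (colmodel a (Suc m)) h =
         measure_pmf.expectation (colmodel a m) (\<lambda>col. measure_pmf.expectation (colstep a (Suc m) col) h)"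
proof -
  have "colmodel a (Suc m) = bind_pmf (colmodel a m) (colstep a (Suc m))" using assms by simp
  moreover have "\<And>col. col \<in> set_pmf (colmodel a m) \<Longrightarrow> finite (set_pmf (colstep a (Suc m) col))"
    using colmodel_inv colstep_finite assms by (auto simp: cinv_def)
  ultimately show ?thesis using colmodel_fin by (simp add: E_bind)
qed

lemma E_colstep:
  fixes h :: "(nat \<Rightarrow> nat) \<Rightarrow> real"
  assumes "i \<ge> 2" "col 1 = 1" "0 \<le> sec_p a i" "sec_p a i \<le> 1"
  shows "measure_pmf.expectation (colstep a i col) h =
     sec_p a i * h (col(i := i)) + (1 - sec_p a i) * ((\<Sum>c\<in>seeds (i - 1) col. h (col(i := c))) / card (seeds (i - 1) col))"
proof -
  have ne: "seeds (i - 1) col \<noteq> {}" using seeds_ne[of i col, OF assms(1,2)] .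
  have fin: "\<And>b. finite (set_pmf (if b then return_pmf (col(i := i))
     else bind_pmf (pmf_of_set (seeds (i - 1) col)) (\<lambda>c. return_pmf (col(i := c)))))"
    using ne by auto
  have e2: "measure_pmf.expectation (bind_pmf (pmf_of_set (seeds (i - 1) col)) (\<lambda>c. return_pmf (col(i := c)))) h
     = (\<Sum>c\<in>seeds (i - 1) col. h (col(i := c))) / card (seeds (i - 1) col)"
  proof -
    have "bind_pmf (pmf_of_set (seeds (i - 1) col)) (\<lambda>c. return_pmf (col(i := c))) = map_pmf (\<lambda>c. col(i := c)) (pmf_of_set (seeds (i - 1) col))"
      by (simp add: map_pmf_def)
    then show ?thesis using ne by (simp add: integral_pmf_of_set)
  qed
  show ?thesis unfolding colstep_def
    apply (subst E_bind)
    using fin assms(3,4) e2 by (auto simp: mult.commute)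
qed

lemma seeds_lt: "c \<in> seeds (i - 1) col \<Longrightarrow> i \<ge> 2 \<Longrightarrow> c < i"
  by (auto simp: seeds_def)

lemma E_exp_K:
  assumes "i \<ge> 2" "col 1 = 1" "0 \<le> sec_p a i" "sec_p a i \<le> 1"
  shows "measure_pmf.expectation (colstep a i col) (\<lambda>c'. exp (t * real (K i c'))) =
         exp (t * real (K (i - 1) col)) * (1 + (exp t - 1) * sec_p a i)"
proof -
  let ?S = "seeds (i - 1) col" and ?p = "sec_p a i" and ?k = "real (K (i - 1) col)"
  have ne: "?S \<noteq> {}" using seeds_ne[of i col, OF assms(1,2)] .
  have cS: "real (card ?S) > 0" using ne by (simp add: card_gt_0_iff)
  have i1: "i \<ge> 1" using assms(1) by simp
  have "(\<Sum>c\<in>?S. exp (t * real (K i (col(i := c))))) = (\<Sum>c\<in>?S. exp (t * ?k))"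
  proof (rule sum.cong[OF refl])
    fix c assume "c \<in> ?S"
    then have "c \<noteq> i" using seeds_lt assms(1) by fastforce
    then show "exp (t * real (K i (col(i := c)))) = exp (t * ?k)" using K_upd[OF i1] by simp
  qed
  also have "\<dots> = real (card ?S) * exp (t * ?k)" by simp
  finally have eq: "(\<Sum>c\<in>?S. exp (t * real (K i (col(i := c))))) = real (card ?S) * exp (t * ?k)" .
  have sm: "(\<Sum>c\<in>?S. exp (t * real (K i (col(i := c))))) / real (card ?S) = exp (t * ?k)"
    by (subst eq) (use cS ne in simp)
  have n: "exp (t * real (K i (col(i := i)))) = exp (t * ?k) * exp t"
    using K_upd[OF i1, of col i] by (simp add: distrib_left exp_add)
  show ?thesis
    apply (subst E_colstep[where col=col and i=i and a=a, OF assms])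
    apply (simp only: sm n)
    by (simp add: algebra_simps)
qed

lemma E_exp_X:
  assumes "i \<ge> 2" "col 1 = 1" "0 \<le> sec_p a i" "sec_p a i \<le> 1"
  shows "measure_pmf.expectation (colstep a i col) (\<lambda>c'. exp (q * real (X i c c'))) =
         exp (q * real (X (i - 1) c col)) * (1 + (exp q - 1) *
           (sec_p a i * (if c = i then 1 else 0) + (1 - sec_p a i) * (if c \<in> seeds (i - 1) col then 1 else 0) / real (card (seeds (i - 1) col))))"
proof -
  let ?S = "seeds (i - 1) col" and ?p = "sec_p a i" and ?x = "real (X (i - 1) c col)"
  have ne: "?S \<noteq> {}" using seeds_ne[of i col, OF assms(1,2)] .
  have cS: "real (card ?S) > 0" using ne by (simp add: card_gt_0_iff)
  have i1: "i \<ge> 1" using assms(1) by simp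
  have "(\<Sum>s\<in>?S. exp (q * real (X i c (col(i := s))))) = (\<Sum>s\<in>?S. exp (q * ?x) + (exp (q * ?x) * (exp q - 1)) * (if s = c then 1 else 0))"
  proof (rule sum.cong[OF refl])
    fix s assume "s \<in> ?S"
    show "exp (q * real (X i c (col(i := s)))) = exp (q * ?x) + (exp (q * ?x) * (exp q - 1)) * (if s = c then 1 else 0)"
      using X_upd[OF i1, of c col s] by (auto simp: distrib_left exp_add algebra_simps)
  qed
  also have "\<dots> = real (card ?S) * exp (q * ?x) + (exp (q * ?x) * (exp q - 1)) * (if c \<in> ?S then 1 else 0)"
    by (simp add: sum.distrib sum_distrib_left[symmetric])
  finally have eq: "(\<Sum>s\<in>?S. exp (q * real (X i c (col(i := s))))) = real (card ?S) * exp (q * ?x) + (exp (q * ?x) * (exp q - 1)) * (if c \<in> ?S then 1 else 0)" .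
  have sm: "(\<Sum>s\<in>?S. exp (q * real (X i c (col(i := s))))) / real (card ?S) =
      exp (q * ?x) + (exp (q * ?x) * (exp q - 1)) * (if c \<in> ?S then 1 else 0) / real (card ?S)"
    by (subst eq) (use cS ne in \<open>simp only: add_divide_distrib, simp\<close>)
  have n: "exp (q * real (X i c (col(i := i)))) = exp (q * ?x) + (exp (q * ?x) * (exp q - 1)) * (if c = i then 1 else 0)"
    using X_upd[OF i1, of c col i] by (auto simp: distrib_left exp_add algebra_simps)
  show ?thesis
    apply (subst E_colstep[where col=col and i=i and a=a, OF assms])
    apply (simp only: sm n)
    by (simp add: algebra_simps)
qed




lemma E_cong:
  fixes f g :: "'a \<Rightarrow> real"
  shows "(\<And>x. x \<in> set_pmf M \<Longrightarrow> f x = g x) \<Longrightarrow> measure_pmf.expectation M f = measure_pmf.expectation M g"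
  by (intro integral_cong_AE) (auto simp: AE_measure_pmf_iff)

lemma E_mono:
  fixes f g :: "'a \<Rightarrow> real"
  assumes "finite (set_pmf M)" "\<And>x. x \<in> set_pmf M \<Longrightarrow> f x \<le> g x"
  shows "measure_pmf.expectation M f \<le> measure_pmf.expectation M g"
  using assms by (intro integral_mono_AE) (auto simp: AE_measure_pmf_iff integrable_measure_pmf_finite)

lemma E_nonneg:
  fixes f :: "'a \<Rightarrow> real"
  assumes "\<And>x. x \<in> set_pmf M \<Longrightarrow> 0 \<le> f x"
  shows "0 \<le> measure_pmf.expectation M f"
  using assms by (intro integral_nonneg_AE) (auto simp: AE_measure_pmf_iff)

lemma prob_le_E:
  fixes f :: "'a \<Rightarrow> real"
  assumes "finite (set_pmf M)" "\<And>x. x \<in> set_pmf M \<Longrightarrow> x \<in> A \<Longrightarrow> 1 \<le> f x"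
    "\<And>x. x \<in> set_pmf M \<Longrightarrow> 0 \<le> f x"
  shows "measure_pmf.prob M A \<le> measure_pmf.expectation M f"
proof -
  have "measure_pmf.prob M A = measure_pmf.expectation M (indicator A)"
    by simp
  also have "\<dots> \<le> measure_pmf.expectation M f"
    using assms by (intro E_mono) (auto simp: indicator_def)
  finally show ?thesis .
qed

lemma colmodel_2: "colmodel a 2 = return_pmf (\<lambda>x. x)"
  by (simp add: numeral_2_eq_2)

lemma colmodel_Suc: "m \<ge> 2 \<Longrightarrow> colmodel a (Suc m) = bind_pmf (colmodel a m) (colstep a (Suc m))"
  by simp

lemma K_mgf:
  assumes "a > 0" "n \<ge> 2"
  shows "measure_pmf.expectation (colmodel a n) (\<lambda>col. exp (t * real (K n col)))
     \<le> exp (2 * t + (exp t - 1) * (\<Sum>j\<in>{3..n}. sec_p a j))"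
  using assms(2)
proof (induction n rule: nat_induct_at_least)
  case base
  have "seeds 2 (\<lambda>x. x) = {1, 2}" by (auto simp: seeds_def)
  then show ?case by (simp add: colmodel_2 K_def)
next
  case (Suc n)
  let ?p = "sec_p a (Suc n)"
  have p: "0 \<le> ?p" "?p \<le> 1" using sec_p_bounds[of a "Suc n"] assms Suc.hyps by auto
  have i2: "Suc n \<ge> 2" using Suc.hyps by simp
  have "measure_pmf.expectation (colmodel a (Suc n)) (\<lambda>col. exp (t * real (K (Suc n) col)))
      = measure_pmf.expectation (colmodel a n) (\<lambda>col. exp (t * real (K n col)) * (1 + (exp t - 1) * ?p))"
    apply (subst E_model_step[OF Suc.hyps])
    apply (rule E_cong)
    subgoal for col
      using E_exp_K[where i="Suc n" and col=col and a=a and t=t, OF i2 _ p] colmodel_inv[of col a n]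
      by (simp add: cinv_def)
    done
  also have "\<dots> = measure_pmf.expectation (colmodel a n) (\<lambda>col. exp (t * real (K n col))) * (1 + (exp t - 1) * ?p)"
    by simp
  also have "\<dots> \<le> exp (2 * t + (exp t - 1) * (\<Sum>j\<in>{3..n}. sec_p a j)) * exp ((exp t - 1) * ?p)"
  proof (rule mult_mono)
    show "1 + (exp t - 1) * ?p \<le> exp ((exp t - 1) * ?p)" by (rule exp_ge_add_one_self[THEN order.trans[OF _ order.refl], simplified add.commute]) 
  next
    have "-1 \<le> exp t - 1" using exp_gt_zero[of t] by linarith
    then have "(-1) * ?p \<le> (exp t - 1) * ?p" by (rule mult_right_mono) (use p in auto)
    then show "0 \<le> 1 + (exp t - 1) * ?p" using p by linarith
  qed (use Suc.IH in \<open>auto intro!: E_nonneg\<close>)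
  also have "\<dots> = exp (2 * t + (exp t - 1) * (\<Sum>j\<in>{3..Suc n}. sec_p a j))"
  proof -
    have "{3..Suc n} = insert (Suc n) {3..n}" using Suc.hyps by auto
    then have "(\<Sum>j\<in>{3..Suc n}. sec_p a j) = ?p + (\<Sum>j\<in>{3..n}. sec_p a j)" by simp
    then show ?thesis by (simp add: exp_add[symmetric] algebra_simps)
  qed
  finally show ?case .
qed

lemma X_zero: "cinv col \<Longrightarrow> m < c \<Longrightarrow> X m c col = 0"
proof -
  assume "cinv col" "m < c"
  then have "{v \<in> {1..m}. col v = c} = {}"
    by (auto simp: cinv_def) (metis le_trans leD)
  then show ?thesis by (simp add: X_def)
qed

lemma K_mono: "j \<le> i \<Longrightarrow> K j col \<le> K i col"
  unfolding K_def by (rule card_mono) (auto simp: seeds_def)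

lemma colstep_upd:
  assumes "i \<ge> 2" "col 1 = 1" "col' \<in> set_pmf (colstep a i col)"
  shows "\<exists>x. col' = col(i := x)"
  using colstep_support[of i col, OF assms] by blast

lemma one_plus_le_exp: "1 + (x::real) \<le> exp x"
  using exp_ge_add_one_self[of x] by simp

lemma X_up:
  assumes a: "a > 0" and m: "m \<ge> 2" "m < c" and l: "0 \<le> l" and kp: "0 < \<kappa>" and i: "m \<le> i"
  shows "measure_pmf.expectation (colmodel a i)
           (\<lambda>col. exp (l * real (X i c col)) * (if \<kappa> \<le> real (K m col) then 1 else 0))
         \<le> exp (l * (if c \<le> i then 1 else 0) + (exp l - 1) * real (i - m) / \<kappa>)"
  using i
proof (induction i rule: nat_induct_at_least)
  case base
  have "measure_pmf.expectation (colmodel a m)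
           (\<lambda>col. exp (l * real (X m c col)) * (if \<kappa> \<le> real (K m col) then 1 else 0))
        \<le> measure_pmf.expectation (colmodel a m) (\<lambda>col. 1)"
    by (rule E_mono[OF colmodel_fin]) (use colmodel_inv X_zero m in auto)
  then show ?case using m by simp
next
  case (Suc i)
  let ?p = "sec_p a (Suc i)"
  let ?ind = "\<lambda>col. (if \<kappa> \<le> real (K m col) then 1 else 0) :: real"
  let ?g = "exp (l * (if c = Suc i then 1 else 0) + (exp l - 1) / \<kappa>)"
  have p: "0 \<le> ?p" "?p \<le> 1" using sec_p_bounds[of a "Suc i"] a Suc.hyps m by auto
  have i2: "Suc i \<ge> 2" "i \<ge> 2" using Suc.hyps m by auto
  have el: "exp l - 1 \<ge> 0" using l by simp
  have step: "measure_pmf.expectation (colstep a (Suc i) col)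
        (\<lambda>c'. exp (l * real (X (Suc i) c c')) * ?ind c') \<le> exp (l * real (X i c col)) * ?ind col * ?g"
    if col: "col \<in> set_pmf (colmodel a i)" for col
  proof -
    have c1: "col 1 = 1" using colmodel_inv[OF col] by (simp add: cinv_def)
    have "measure_pmf.expectation (colstep a (Suc i) col) (\<lambda>c'. exp (l * real (X (Suc i) c c')) * ?ind c')
        = measure_pmf.expectation (colstep a (Suc i) col) (\<lambda>c'. exp (l * real (X (Suc i) c c')) * ?ind col)"
    proof (rule E_cong)
      fix c' assume "c' \<in> set_pmf (colstep a (Suc i) col)"
      then obtain x where "c' = col(Suc i := x)" using colstep_upd[of "Suc i" col, OF i2(1) c1] by blast
      moreover have "m < Suc i" using Suc.hyps by simp
      ultimately show "exp (l * real (X (Suc i) c c')) * ?ind c' = exp (l * real (X (Suc i) c c')) * ?ind col"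
        by (simp add: K_def seeds_upd_lt)
    qed
    also have "\<dots> = measure_pmf.expectation (colstep a (Suc i) col) (\<lambda>c'. exp (l * real (X (Suc i) c c'))) * ?ind col"
      by simp
    also have "\<dots> = exp (l * real (X i c col)) * (1 + (exp l - 1) *
           (?p * (if c = Suc i then 1 else 0) + (1 - ?p) * (if c \<in> seeds i col then 1 else 0) / real (card (seeds i col)))) * ?ind col"
      using E_exp_X[where i="Suc i" and col=col and a=a and q=l and c=c, OF i2(1) c1 p] by simp
    also have "\<dots> \<le> exp (l * real (X i c col)) * ?ind col * ?g"
    proof (cases "\<kappa> \<le> real (K m col)")
      case False then show ?thesis by simp
    next
      case True
      have "1 + (exp l - 1) * (?p * (if c = Suc i then 1 else 0) + (1 - ?p) * (if c \<in> seeds i col then 1 else 0) / real (card (seeds i col))) \<le> ?g"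
      proof (cases "c = Suc i")
        case True
        then have "c \<notin> seeds i col" by (auto simp: seeds_def)
        then have "1 + (exp l - 1) * (?p * (if c = Suc i then 1 else 0) + (1 - ?p) * (if c \<in> seeds i col then 1 else 0) / real (card (seeds i col)))
           = 1 + (exp l - 1) * ?p" using True by simp
        also have "\<dots> \<le> 1 + (exp l - 1) * 1" using el p by (intro add_left_mono mult_left_mono) auto
        also have "\<dots> = exp l" by simp
        also have "\<dots> \<le> ?g" using True el kp by simp
        finally show ?thesis .
      next
        case False
        have KK: "\<kappa> \<le> real (card (seeds i col))"
          using True K_mono[of m i col] Suc.hyps unfolding K_def by linarith
        have "(1 - ?p) * (if c \<in> seeds i col then 1 else 0) / real (card (seeds i col)) \<le> 1 / \<kappa>"
        proof -
          have "(1 - ?p) * (if c \<in> seeds i col then 1 else 0) \<le> 1" using p by auto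
          moreover have "0 \<le> (1 - ?p) * (if c \<in> seeds i col then 1 else 0)" using p by auto
          ultimately show ?thesis using KK kp by (intro frac_le) auto
        qed
        then have "(exp l - 1) * ((1 - ?p) * (if c \<in> seeds i col then 1 else 0) / real (card (seeds i col))) \<le> (exp l - 1) * (1 / \<kappa>)"
          by (rule mult_left_mono[OF _ el])
        then have "1 + (exp l - 1) * (?p * (if c = Suc i then 1 else 0) + (1 - ?p) * (if c \<in> seeds i col then 1 else 0) / real (card (seeds i col)))
           \<le> 1 + (exp l - 1) * (1 / \<kappa>)" using False by simp
        also have "\<dots> \<le> exp ((exp l - 1) / \<kappa>)" using one_plus_le_exp[of "(exp l - 1) / \<kappa>"] by simp
        also have "\<dots> = ?g" using False by simp
        finally show ?thesis .
      qed
      then show ?thesis using True by simp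
    qed
    finally show ?thesis .
  qed
  have "measure_pmf.expectation (colmodel a (Suc i)) (\<lambda>col. exp (l * real (X (Suc i) c col)) * ?ind col)
      = measure_pmf.expectation (colmodel a i) (\<lambda>col. measure_pmf.expectation (colstep a (Suc i) col) (\<lambda>c'. exp (l * real (X (Suc i) c c')) * ?ind c'))"
    by (rule E_model_step[OF i2(2)])
  also have "\<dots> \<le> measure_pmf.expectation (colmodel a i) (\<lambda>col. exp (l * real (X i c col)) * ?ind col * ?g)"
    by (rule E_mono[OF colmodel_fin]) (rule step)
  also have "\<dots> = measure_pmf.expectation (colmodel a i) (\<lambda>col. exp (l * real (X i c col)) * ?ind col) * ?g"
    by simp
  also have "\<dots> \<le> exp (l * (if c \<le> i then 1 else 0) + (exp l - 1) * real (i - m) / \<kappa>) * ?g"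
    using Suc.IH by (intro mult_right_mono) auto
  also have "\<dots> = exp (l * (if c \<le> Suc i then 1 else 0) + (exp l - 1) * real (Suc i - m) / \<kappa>)"
  proof -
    have e1: "(if c \<le> i then 1 else 0) + (if c = Suc i then 1 else 0) = (if c \<le> Suc i then 1 else (0::real))"
      by auto
    have e2: "real (Suc i - m) = real (i - m) + 1" using Suc.hyps by simp
    show ?thesis unfolding exp_add[symmetric]
      by (rule arg_cong[where f=exp]) (simp add: e2 e1[symmetric] algebra_simps add_divide_distrib diff_divide_distrib)
  qed
  finally show ?case .
qed

lemma X_low:
  assumes a: "a > 0" and m: "m \<ge> 2" "1 \<le> c" "c \<le> m" and l: "0 \<le> l" and kp: "0 < \<kappa>" and i: "m \<le> i"
  shows "measure_pmf.expectation (colmodel a i)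
           (\<lambda>col. exp (- l * real (X i c col)) * (if real (K i col) \<le> \<kappa> then 1 else 0) * (if col c = c then 1 else 0))
         \<le> exp (- (1 - exp (- l)) * (\<Sum>j\<in>{m+1..i}. 1 - sec_p a j) / \<kappa>)"
  using i
proof (induction i rule: nat_induct_at_least)
  case base
  have "measure_pmf.expectation (colmodel a m)
           (\<lambda>col. exp (- l * real (X m c col)) * (if real (K m col) \<le> \<kappa> then 1 else 0) * (if col c = c then 1 else 0))
        \<le> measure_pmf.expectation (colmodel a m) (\<lambda>col. 1)"
  proof (rule E_mono[OF colmodel_fin])
    fix col
    have "exp (- l * real (X m c col)) \<le> 1" using l by simp
    then show "exp (- l * real (X m c col)) * (if real (K m col) \<le> \<kappa> then 1 else 0) * (if col c = c then 1 else 0) \<le> 1"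
      by auto
  qed
  then show ?case by simp
next
  case (Suc i)
  let ?p = "sec_p a (Suc i)"
  let ?indK = "\<lambda>j col. (if real (K j col) \<le> \<kappa> then 1 else 0) :: real"
  let ?indc = "\<lambda>col. (if col c = c then 1 else 0) :: real"
  let ?g = "exp (- (1 - exp (- l)) * (1 - ?p) / \<kappa>)"
  have p: "0 \<le> ?p" "?p \<le> 1" using sec_p_bounds[of a "Suc i"] a Suc.hyps m by auto
  have i2: "Suc i \<ge> 2" "i \<ge> 2" using Suc.hyps m by auto
  have el: "exp (- l) - 1 \<le> 0" using l by simp
  have step: "measure_pmf.expectation (colstep a (Suc i) col)
        (\<lambda>c'. exp (- l * real (X (Suc i) c c')) * ?indK (Suc i) c' * ?indc c') \<le> exp (- l * real (X i c col)) * ?indK i col * ?indc col * ?g"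
    if col: "col \<in> set_pmf (colmodel a i)" for col
  proof -
    have c1: "col 1 = 1" using colmodel_inv[OF col] by (simp add: cinv_def)
    have "measure_pmf.expectation (colstep a (Suc i) col) (\<lambda>c'. exp (- l * real (X (Suc i) c c')) * ?indK (Suc i) c' * ?indc c')
        \<le> measure_pmf.expectation (colstep a (Suc i) col) (\<lambda>c'. exp (- l * real (X (Suc i) c c')) * ?indK i col * ?indc col)"
    proof (rule E_mono[OF colstep_finite[of "Suc i" col, OF i2(1) c1]])
      fix c' assume "c' \<in> set_pmf (colstep a (Suc i) col)"
      then obtain x where x: "c' = col(Suc i := x)" using colstep_upd[of "Suc i" col, OF i2(1) c1] by blast
      have "c \<noteq> Suc i" using Suc.hyps m by simp
      then have e1: "?indc c' = ?indc col" using x by simp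
      have "K i col \<le> K (Suc i) c'" using x K_upd[of "Suc i" col x] by simp
      then have e2: "?indK (Suc i) c' \<le> ?indK i col" by auto
      show "exp (- l * real (X (Suc i) c c')) * ?indK (Suc i) c' * ?indc c' \<le> exp (- l * real (X (Suc i) c c')) * ?indK i col * ?indc col"
        unfolding e1 by (intro mult_right_mono mult_left_mono e2) auto
    qed
    also have "\<dots> = measure_pmf.expectation (colstep a (Suc i) col) (\<lambda>c'. exp (- l * real (X (Suc i) c c'))) * ?indK i col * ?indc col"
      by simp
    also have "\<dots> = exp (- l * real (X i c col)) * (1 + (exp (- l) - 1) *
           (?p * (if c = Suc i then 1 else 0) + (1 - ?p) * (if c \<in> seeds i col then 1 else 0) / real (card (seeds i col)))) * ?indK i col * ?indc col"
      using E_exp_X[where i="Suc i" and col=col and a=a and q="- l" and c=c, OF i2(1) c1 p] by simp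
    also have "\<dots> \<le> exp (- l * real (X i c col)) * ?indK i col * ?indc col * ?g"
    proof (cases "real (K i col) \<le> \<kappa> \<and> col c = c")
      case False then show ?thesis by auto
    next
      case True
      have cS: "c \<in> seeds i col" using True m Suc.hyps by (auto simp: seeds_def)
      have cne: "c \<noteq> Suc i" using Suc.hyps m by simp
      have pos: "0 < real (card (seeds i col))" using cS by (auto simp: card_gt_0_iff)
      have KK: "real (card (seeds i col)) \<le> \<kappa>" using True by (simp add: K_def)
      have "(1 - ?p) / \<kappa> \<le> (1 - ?p) / real (card (seeds i col))"
        using p pos KK by (intro divide_left_mono) auto
      then have "(exp (- l) - 1) * ((1 - ?p) / real (card (seeds i col))) \<le> (exp (- l) - 1) * ((1 - ?p) / \<kappa>)"
        by (rule mult_left_mono_neg[OF _ el])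
      then have "1 + (exp (- l) - 1) * (?p * (if c = Suc i then 1 else 0) + (1 - ?p) * (if c \<in> seeds i col then 1 else 0) / real (card (seeds i col)))
          \<le> 1 + (exp (- l) - 1) * ((1 - ?p) / \<kappa>)" using cS cne by simp
      also have "\<dots> \<le> ?g" using one_plus_le_exp[of "(exp (- l) - 1) * ((1 - ?p) / \<kappa>)"] by (simp add: algebra_simps)
      finally have "1 + (exp (- l) - 1) * (?p * (if c = Suc i then 1 else 0) + (1 - ?p) * (if c \<in> seeds i col then 1 else 0) / real (card (seeds i col))) \<le> ?g" .
      then show ?thesis using True by simp
    qed
    finally show ?thesis .
  qed
  have "measure_pmf.expectation (colmodel a (Suc i)) (\<lambda>col. exp (- l * real (X (Suc i) c col)) * ?indK (Suc i) col * ?indc col)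
      = measure_pmf.expectation (colmodel a i) (\<lambda>col. measure_pmf.expectation (colstep a (Suc i) col) (\<lambda>c'. exp (- l * real (X (Suc i) c c')) * ?indK (Suc i) c' * ?indc c'))"
    by (rule E_model_step[OF i2(2)])
  also have "\<dots> \<le> measure_pmf.expectation (colmodel a i) (\<lambda>col. exp (- l * real (X i c col)) * ?indK i col * ?indc col * ?g)"
    by (rule E_mono[OF colmodel_fin]) (rule step)
  also have "\<dots> = measure_pmf.expectation (colmodel a i) (\<lambda>col. exp (- l * real (X i c col)) * ?indK i col * ?indc col) * ?g"
    by simp
  also have "\<dots> \<le> exp (- (1 - exp (- l)) * (\<Sum>j\<in>{m+1..i}. 1 - sec_p a j) / \<kappa>) * ?g"
    using Suc.IH by (intro mult_right_mono) auto
  also have "\<dots> = exp (- (1 - exp (- l)) * (\<Sum>j\<in>{m+1..Suc i}. 1 - sec_p a j) / \<kappa>)"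
  proof -
    have "{m+1..Suc i} = insert (Suc i) {m+1..i}" using Suc.hyps by auto
    then have e: "(\<Sum>j\<in>{m+1..Suc i}. 1 - sec_p a j) = (1 - ?p) + (\<Sum>j\<in>{m+1..i}. 1 - sec_p a j)" by simp
    show ?thesis unfolding exp_add[symmetric] e
      by (rule arg_cong[where f=exp]) (simp add: algebra_simps add_divide_distrib diff_divide_distrib)
  qed
  finally show ?case .
qed

lemma P_A1:
  assumes "a > 0" "n \<ge> 2" "t > 0"
  shows "measure_pmf.prob (colmodel a n) {col. \<kappa> < real (K n col)}
     \<le> exp (2 * t + (exp t - 1) * (\<Sum>j\<in>{3..n}. sec_p a j) - t * \<kappa>)"
proof -
  have "measure_pmf.prob (colmodel a n) {col. \<kappa> < real (K n col)}
      \<le> measure_pmf.expectation (colmodel a n) (\<lambda>col. exp (t * real (K n col)) * exp (- t * \<kappa>))"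
  proof (rule prob_le_E[OF colmodel_fin])
    fix col assume "col \<in> {col. \<kappa> < real (K n col)}"
    then have "0 \<le> t * real (K n col) + (- t * \<kappa>)" using assms
      by (simp add: algebra_simps)
    then show "1 \<le> exp (t * real (K n col)) * exp (- t * \<kappa>)"
      by (simp add: exp_add[symmetric])
  qed simp
  also have "\<dots> = measure_pmf.expectation (colmodel a n) (\<lambda>col. exp (t * real (K n col))) * exp (- t * \<kappa>)"
    by simp
  also have "\<dots> \<le> exp (2 * t + (exp t - 1) * (\<Sum>j\<in>{3..n}. sec_p a j)) * exp (- t * \<kappa>)"
    using K_mgf[OF assms(1,2), of t] by (intro mult_right_mono) auto
  also have "\<dots> = exp (2 * t + (exp t - 1) * (\<Sum>j\<in>{3..n}. sec_p a j) - t * \<kappa>)"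
    by (simp add: exp_add[symmetric])
  finally show ?thesis .
qed

lemma P_A2:
  assumes "a > 0" "m \<ge> 2" "t > 0"
  shows "measure_pmf.prob (colmodel a m) {col. real (K m col) < \<kappa>}
     \<le> exp (- 2 * t + (exp (- t) - 1) * (\<Sum>j\<in>{3..m}. sec_p a j) + t * \<kappa>)"
proof -
  have "measure_pmf.prob (colmodel a m) {col. real (K m col) < \<kappa>}
      \<le> measure_pmf.expectation (colmodel a m) (\<lambda>col. exp (- t * real (K m col)) * exp (t * \<kappa>))"
  proof (rule prob_le_E[OF colmodel_fin])
    fix col assume "col \<in> {col. real (K m col) < \<kappa>}"
    then have "t * real (K m col) \<le> t * \<kappa>" using assms by simp
    then have "0 \<le> - t * real (K m col) + t * \<kappa>" by simp
    then show "1 \<le> exp (- t * real (K m col)) * exp (t * \<kappa>)"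
      by (simp add: exp_add[symmetric])
  qed simp
  also have "\<dots> = measure_pmf.expectation (colmodel a m) (\<lambda>col. exp (- t * real (K m col))) * exp (t * \<kappa>)"
    by simp
  also have "\<dots> \<le> exp (2 * (- t) + (exp (- t) - 1) * (\<Sum>j\<in>{3..m}. sec_p a j)) * exp (t * \<kappa>)"
    using K_mgf[OF assms(1,2), of "- t"] by (intro mult_right_mono) auto
  also have "\<dots> = exp (- 2 * t + (exp (- t) - 1) * (\<Sum>j\<in>{3..m}. sec_p a j) + t * \<kappa>)"
    by (simp add: exp_add[symmetric])
  finally show ?thesis .
qed

lemma P_B1:
  assumes "a > 0" "m \<ge> 2" "1 \<le> c" "c \<le> m" "0 < \<kappa>" "m \<le> n"
  shows "measure_pmf.prob (colmodel a n) {col. col c = c \<and> real (X n c col) < L \<and> real (K n col) \<le> \<kappa>}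
     \<le> exp (L - (1 - exp (- 1)) * (\<Sum>j\<in>{m+1..n}. 1 - sec_p a j) / \<kappa>)"
proof -
  let ?f = "\<lambda>col. exp (- 1 * real (X n c col)) * (if real (K n col) \<le> \<kappa> then 1 else 0) * (if col c = c then 1 else 0)"
  have "measure_pmf.prob (colmodel a n) {col. col c = c \<and> real (X n c col) < L \<and> real (K n col) \<le> \<kappa>}
      \<le> measure_pmf.expectation (colmodel a n) (\<lambda>col. ?f col * exp L)"
  proof (rule prob_le_E[OF colmodel_fin])
    fix col assume "col \<in> {col. col c = c \<and> real (X n c col) < L \<and> real (K n col) \<le> \<kappa>}"
    then have h: "col c = c" "real (X n c col) < L" "real (K n col) \<le> \<kappa>" by auto
    then have "0 \<le> - 1 * real (X n c col) + L" by simp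
    then show "1 \<le> ?f col * exp L" using h by (simp add: exp_add[symmetric])
  qed simp
  also have "\<dots> = measure_pmf.expectation (colmodel a n) ?f * exp L"
    by simp
  also have "\<dots> \<le> exp (- (1 - exp (- 1)) * (\<Sum>j\<in>{m+1..n}. 1 - sec_p a j) / \<kappa>) * exp L"
    using X_low[OF assms(1,2,3,4) _ assms(5,6), of 1] by (intro mult_right_mono) auto
  also have "\<dots> = exp (L - (1 - exp (- 1)) * (\<Sum>j\<in>{m+1..n}. 1 - sec_p a j) / \<kappa>)"
    using assms(5) by (simp add: exp_add[symmetric] field_simps)
  finally show ?thesis .
qed

lemma P_B2:
  assumes "a > 0" "m \<ge> 2" "m < c" "0 < \<kappa>" "m \<le> n"
  shows "measure_pmf.prob (colmodel a n) {col. T < real (X n c col) \<and> \<kappa> \<le> real (K m col)}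
     \<le> exp (1 + (exp 1 - 1) * real (n - m) / \<kappa> - T)"
proof -
  let ?f = "\<lambda>col. exp (1 * real (X n c col)) * (if \<kappa> \<le> real (K m col) then 1 else 0)"
  have "measure_pmf.prob (colmodel a n) {col. T < real (X n c col) \<and> \<kappa> \<le> real (K m col)}
      \<le> measure_pmf.expectation (colmodel a n) (\<lambda>col. ?f col * exp (- T))"
  proof (rule prob_le_E[OF colmodel_fin])
    fix col assume "col \<in> {col. T < real (X n c col) \<and> \<kappa> \<le> real (K m col)}"
    then have h: "T < real (X n c col)" "\<kappa> \<le> real (K m col)" by auto
    then have "0 \<le> 1 * real (X n c col) + - T" by simp
    then show "1 \<le> ?f col * exp (- T)" using h by (simp add: exp_add[symmetric])
  qed simp
  also have "\<dots> = measure_pmf.expectation (colmodel a n) ?f * exp (- T)"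
    by simp
  also have "\<dots> \<le> exp (1 * (if c \<le> n then 1 else 0) + (exp 1 - 1) * real (n - m) / \<kappa>) * exp (- T)"
    using X_up[OF assms(1,2,3) _ assms(4,5), of 1] by (intro mult_right_mono) auto
  also have "\<dots> \<le> exp (1 + (exp 1 - 1) * real (n - m) / \<kappa>) * exp (- T)"
    by (intro mult_right_mono) auto
  also have "\<dots> = exp (1 + (exp 1 - 1) * real (n - m) / \<kappa> - T)"
    by (simp add: exp_add[symmetric])
  finally show ?thesis .
qed



lemma R_Y: "a > 1 \<Longrightarrow> filterlim (\<lambda>n::nat. real n * ln (real n) powr (-a)) at_top at_top"
  by real_asymp
lemma R_delta: "a > 1 \<Longrightarrow> (\<lambda>n::nat. 10 / ln (real n) powr (a - 1)) \<longlonglongrightarrow> 0"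
  by real_asymp
lemma R_half: "a > 1 \<Longrightarrow> (\<lambda>n::nat. ln (real n / 2) powr (-a)) \<longlonglongrightarrow> 0"
  by real_asymp
lemma R_theta: "a > 1 \<Longrightarrow> 0 < \<theta> \<Longrightarrow> \<theta> < 1 \<Longrightarrow> (\<lambda>n::nat. real n powr \<theta> / (real n * ln (real n) powr (-a))) \<longlonglongrightarrow> 0"
  by real_asymp
lemma R_L: "filterlim (\<lambda>n::nat. ln (real n)) at_top at_top"
  by real_asymp
lemma R_eps: "a > 1 \<Longrightarrow> (\<lambda>n::nat. exp (1 - (real n * ln (real n) powr (-a)) / 5) + exp (- (real n * ln (real n) powr (-a)) / 50)
   + real n * exp (- 9/5 * ln (real n)) + real n * exp (1 - 9/2 * ln (real n))) \<longlonglongrightarrow> 0"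
  by real_asymp



lemma e_gt: "exp 1 > (271/100::real)"
  using e_approx_32 by (simp add: abs_if split: if_splits)

lemma e_lt: "exp 1 < (272/100::real)"
  by (rule e_less_272)

lemma exp_half_le: "exp (1/2::real) \<le> 5/3"
proof (rule ccontr)
  assume "\<not> exp (1/2::real) \<le> 5/3"
  then have h: "5/3 < exp (1/2::real)" by simp
  have "(5/3) * (5/3) < exp (1/2::real) * exp (1/2)"
    using h by (intro mult_strict_mono) auto
  also have "\<dots> = exp 1" by (simp add: exp_add[symmetric])
  finally show False using e_lt by simp
qed

lemma exp_m1_le: "exp (-1::real) \<le> 37/100"
proof -
  have "exp (-1::real) = 1 / exp 1" by (simp add: exp_minus field_simps)
  also have "\<dots> \<le> 1 / (271/100)" using e_gt by (intro divide_left_mono) auto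
  also have "\<dots> \<le> 37/100" by simp
  finally show ?thesis .
qed

lemma exp_m5_le: "exp (-1/5::real) \<le> 82/100"
proof -
  have l: "1 + 1/5 + (1/5)\<^sup>2/2 \<le> exp (1/5::real)" by (rule exp_lower_Taylor_quadratic) simp
  have "exp (-1/5::real) = 1 / exp (1/5)" by (simp add: exp_minus field_simps)
  also have "\<dots> \<le> 1 / (1 + 1/5 + (1/5)\<^sup>2/2)"
    using l by (intro divide_left_mono mult_pos_pos) (auto simp: power2_eq_square)
  also have "\<dots> \<le> 82/100" by (simp add: power2_eq_square)
  finally show ?thesis .
qed

lemma E_stable:
  fixes f :: "(nat \<Rightarrow> nat) \<Rightarrow> real"
  assumes f: "\<And>col x i. m < i \<Longrightarrow> f (col(i := x)) = f col" and m: "m \<ge> 2" and n: "m \<le> n"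
  shows "measure_pmf.expectation (colmodel a n) f = measure_pmf.expectation (colmodel a m) f"
  using n
proof (induction n rule: nat_induct_at_least)
  case base then show ?case by simp
next
  case (Suc n)
  have i2: "Suc n \<ge> 2" "n \<ge> 2" using Suc.hyps m by auto
  have "measure_pmf.expectation (colmodel a (Suc n)) f
     = measure_pmf.expectation (colmodel a n) (\<lambda>col. measure_pmf.expectation (colstep a (Suc n) col) f)"
    by (rule E_model_step[OF i2(2)])
  also have "\<dots> = measure_pmf.expectation (colmodel a n) f"
  proof (rule E_cong)
    fix col assume col: "col \<in> set_pmf (colmodel a n)"
    have c1: "col 1 = 1" using colmodel_inv[OF col] by (simp add: cinv_def)
    have "measure_pmf.expectation (colstep a (Suc n) col) f = measure_pmf.expectation (colstep a (Suc n) col) (\<lambda>_. f col)"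
    proof (rule E_cong)
      fix c' assume "c' \<in> set_pmf (colstep a (Suc n) col)"
      then obtain x where "c' = col(Suc n := x)" using colstep_upd[of "Suc n" col, OF i2(1) c1] by blast
      then show "f c' = f col" using f Suc.hyps by simp
    qed
    then show "measure_pmf.expectation (colstep a (Suc n) col) f = f col" by simp
  qed
  finally show ?case using Suc.IH by simp
qed

lemma P_A2':
  assumes "a > 0" "m \<ge> 2" "t > 0" "m \<le> n"
  shows "measure_pmf.prob (colmodel a n) {col. real (K m col) < \<kappa>}
     \<le> exp (- 2 * t + (exp (- t) - 1) * (\<Sum>j\<in>{3..m}. sec_p a j) + t * \<kappa>)"
proof -
  have st: "\<And>col x i. m < i \<Longrightarrow> indicator {col. real (K m col) < \<kappa>} (col(i := x)) = (indicator {col. real (K m col) < \<kappa>} col :: real)"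
    by (simp add: K_def seeds_upd_lt indicator_def)
  have "measure_pmf.prob (colmodel a n) {col. real (K m col) < \<kappa>}
      = measure_pmf.expectation (colmodel a n) (indicator {col. real (K m col) < \<kappa>})" by simp
  also have "\<dots> = measure_pmf.expectation (colmodel a m) (indicator {col. real (K m col) < \<kappa>})"
    by (rule E_stable[OF st assms(2,4)])
  also have "\<dots> = measure_pmf.prob (colmodel a m) {col. real (K m col) < \<kappa>}" by simp
  also have "\<dots> \<le> exp (- 2 * t + (exp (- t) - 1) * (\<Sum>j\<in>{3..m}. sec_p a j) + t * \<kappa>)"
    by (rule P_A2[OF assms(1-3)])
  finally show ?thesis .
qed

lemma S_lower:
  assumes "a > 0" "2 \<le> m" "m \<le> n"
  shows "(\<Sum>j\<in>{3..m}. sec_p a j) \<ge> (real m - 2) * ln (real n) powr (- a)"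
proof -
  have "(\<Sum>j\<in>{3..m}. ln (real n) powr (- a)) \<le> (\<Sum>j\<in>{3..m}. sec_p a j)"
  proof (rule sum_mono)
    fix j assume j: "j \<in> {3..m}"
    have l: "ln (real j) \<ge> 1" using j by (intro ln_ge1) auto
    have "ln (real j) \<le> ln (real n)" using j assms by auto
    then show "ln (real n) powr (- a) \<le> sec_p a j"
      unfolding sec_p_def using l assms by (intro powr_mono2') auto
  qed
  moreover have "card {3..m} = m - 2" by simp
  moreover have "real (m - 2) = real m - 2" using assms by simp
  ultimately show ?thesis by (simp add: mult.commute)
qed




lemma S_upper:
  assumes a: "a > 0" and th: "0 < \<theta>" "\<theta> < 1" and n: "n \<ge> 3"
  shows "(\<Sum>j\<in>{3..n}. sec_p a j) \<le> real n powr \<theta> + \<theta> powr (-a) * (real n * ln (real n) powr (-a))"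
proof -
  let ?x = "real n powr \<theta>"
  let ?L = "ln (real n)"
  define A where "A = {j\<in>{3..n}. real j \<le> ?x}"
  define B where "B = {j\<in>{3..n}. \<not> real j \<le> ?x}"
  have AB: "{3..n} = A \<union> B" "A \<inter> B = {}" "finite A" "finite B" by (auto simp: A_def B_def)
  have sA: "(\<Sum>j\<in>A. sec_p a j) \<le> ?x"
  proof -
    have "(\<Sum>j\<in>A. sec_p a j) \<le> (\<Sum>j\<in>A. 1)"
      using sec_p_bounds[OF a] by (intro sum_mono) (auto simp: A_def)
    also have "\<dots> = real (card A)" by simp
    also have "\<dots> \<le> real (card {1..nat \<lfloor>?x\<rfloor>})"
    proof -
      have "A \<subseteq> {1..nat \<lfloor>?x\<rfloor>}"
      proof
        fix j assume "j \<in> A"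
        then have "real j \<le> ?x" "3 \<le> j" by (auto simp: A_def)
        then have "int j \<le> \<lfloor>?x\<rfloor>" by (simp add: le_floor_iff)
        then show "j \<in> {1..nat \<lfloor>?x\<rfloor>}" using \<open>3 \<le> j\<close> by auto
      qed
      then show ?thesis by (intro of_nat_mono card_mono) auto
    qed
    also have "\<dots> \<le> ?x" by simp
    finally show ?thesis .
  qed
  have Lpos: "?L > 0" using n by simp
  have sB: "(\<Sum>j\<in>B. sec_p a j) \<le> \<theta> powr (-a) * (real n * ?L powr (-a))"
  proof -
    have "(\<Sum>j\<in>B. sec_p a j) \<le> (\<Sum>j\<in>B. (\<theta> * ?L) powr (-a))"
    proof (rule sum_mono)
      fix j assume "j \<in> B"
      then have j: "?x < real j" "j \<le> n" by (auto simp: B_def)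
      have xp: "0 < ?x" using n by simp
      have "\<theta> * ?L = ln ?x" using n by (simp add: ln_powr)
      also have "\<dots> \<le> ln (real j)"
        by (rule ln_mono) (use j xp in auto)
      finally have "\<theta> * ?L \<le> ln (real j)" .
      then show "sec_p a j \<le> (\<theta> * ?L) powr (-a)"
        unfolding sec_p_def using th Lpos a by (intro powr_mono2') auto
    qed
    also have "\<dots> = real (card B) * (\<theta> powr (-a) * ?L powr (-a))"
      using th Lpos by (simp add: powr_mult)
    also have "\<dots> \<le> real n * (\<theta> powr (-a) * ?L powr (-a))"
    proof (rule mult_right_mono)
      have "card B \<le> card {3..n}" by (rule card_mono) (auto simp: B_def)
      then show "real (card B) \<le> real n" by simp
    qed simp
    finally show ?thesis by (simp add: algebra_simps)
  qed
  have "(\<Sum>j\<in>{3..n}. sec_p a j) = (\<Sum>j\<in>A. sec_p a j) + (\<Sum>j\<in>B. sec_p a j)"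
    using AB by (simp add: sum.union_disjoint)
  then show ?thesis using sA sB by linarith
qed

lemma main_bound:
  fixes n m :: nat and L Y :: real
  assumes a: "a > 1" and n3: "n \<ge> 3" and m2: "m \<ge> 2" and mn: "m \<le> n"
    and Ldef: "L = ln (real n)" and Ydef: "Y = real n * L powr (-a)" and Ypos: "Y > 0" and Lpos: "L > 0"
    and C1: "(\<Sum>j\<in>{3..n}. sec_p a j) \<le> 6/5 * Y"
    and C2: "real m - 2 \<ge> 19/20 * real n"
    and C3: "\<And>j. m+1 \<le> j \<Longrightarrow> j \<le> n \<Longrightarrow> sec_p a j \<le> 1/10"
    and C4: "real (n - m) \<ge> 10 * L * Y"
    and C5: "real (n - m) \<le> 11 * L * Y"
  shows "measure_pmf.prob (colmodel a n) (- {col. (\<forall>c\<in>seeds n col. c \<le> m \<longrightarrow> L \<le> real (X n c col)) \<and> (\<forall>c\<in>seeds n col. m < c \<longrightarrow> real (X n c col) \<le> 30 * L)})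
    \<le> exp (1 - Y/5) + exp (- Y/50) + real n * exp (- 9/5 * L) + real n * exp (1 - 9/2 * L)"
proof -
  let ?M = "measure_pmf.prob (colmodel a n)"
  let ?G = "{col. (\<forall>c\<in>seeds n col. c \<le> m \<longrightarrow> L \<le> real (X n c col)) \<and> (\<forall>c\<in>seeds n col. m < c \<longrightarrow> real (X n c col) \<le> 30 * L)}"
  define A1 where "A1 = {col. 2 * Y < real (K n col)}"
  define A2 where "A2 = {col. real (K m col) < 3/4 * Y}"
  define B1 where "B1 = (\<lambda>c. {col. col c = c \<and> real (X n c col) < L \<and> real (K n col) \<le> 2 * Y})"
  define B2 where "B2 = (\<lambda>c. {col. 30 * L < real (X n c col) \<and> 3/4 * Y \<le> real (K m col)})"
  have a0: "a > 0" using a by simp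
  have n2: "n \<ge> 2" using n3 by simp
  have sub: "- ?G \<subseteq> ((A1 \<union> A2) \<union> (\<Union>c\<in>{1..m}. B1 c)) \<union> (\<Union>c\<in>{m+1..n}. B2 c)"
  proof
    fix col assume "col \<in> - ?G"
    then obtain c where c: "c \<in> seeds n col" and
      h: "(c \<le> m \<and> real (X n c col) < L) \<or> (m < c \<and> 30 * L < real (X n c col))"
      by (auto simp: not_le)
    have cc: "col c = c" "1 \<le> c" "c \<le> n" using c by (auto simp: seeds_def)
    show "col \<in> ((A1 \<union> A2) \<union> (\<Union>c\<in>{1..m}. B1 c)) \<union> (\<Union>c\<in>{m+1..n}. B2 c)"
      using h cc by (cases "2 * Y < real (K n col)"; cases "real (K m col) < 3/4 * Y")
        (auto simp: A1_def A2_def B1_def B2_def not_less)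
  qed
  have pA1: "?M A1 \<le> exp (1 - Y/5)"
  proof -
    have "?M A1 \<le> exp (2 * (1/2) + (exp (1/2) - 1) * (\<Sum>j\<in>{3..n}. sec_p a j) - 1/2 * (2 * Y))"
      unfolding A1_def by (rule P_A1[OF a0 n2]) simp
    also have "\<dots> \<le> exp (1 - Y/5)"
    proof -
      have S0: "0 \<le> (\<Sum>j\<in>{3..n}. sec_p a j)" using sec_p_bounds[OF a0] by (intro sum_nonneg) auto
      have e0: "0 \<le> exp (1/2::real) - 1" by simp
      have "(exp (1/2) - 1) * (\<Sum>j\<in>{3..n}. sec_p a j) \<le> (2/3) * (6/5 * Y)"
        using exp_half_le C1 S0 e0 by (intro mult_mono) auto
      then show ?thesis by simp
    qed
    finally show ?thesis .
  qed
  have pA2: "?M A2 \<le> exp (- Y/50)"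
  proof -
    have "?M A2 \<le> exp (- 2 * (1/5) + (exp (- (1/5)) - 1) * (\<Sum>j\<in>{3..m}. sec_p a j) + 1/5 * (3/4 * Y))"
      unfolding A2_def by (rule P_A2'[OF a0 m2 _ mn]) simp
    also have "\<dots> \<le> exp (- Y/50)"
    proof -
      have Sm: "(\<Sum>j\<in>{3..m}. sec_p a j) \<ge> (real m - 2) * L powr (-a)"
        using S_lower[OF a0 m2 mn] Ldef by simp
      have "(real m - 2) * L powr (-a) \<ge> 19/20 * real n * L powr (-a)"
        using C2 by (intro mult_right_mono) auto
      then have Sm2: "(\<Sum>j\<in>{3..m}. sec_p a j) \<ge> 19/20 * Y" using Sm Ydef by simp
      have e: "exp (- (1/5)) - 1 \<le> (-18/100::real)" using exp_m5_le by simp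
      have "(exp (- (1/5)) - 1) * (\<Sum>j\<in>{3..m}. sec_p a j) \<le> (-18/100) * (\<Sum>j\<in>{3..m}. sec_p a j)"
        using e Sm2 Ypos by (intro mult_right_mono) auto
      also have "\<dots> \<le> (-18/100) * (19/20 * Y)"
        using Sm2 by (intro mult_left_mono_neg) auto
      finally have "(exp (- (1/5)) - 1) * (\<Sum>j\<in>{3..m}. sec_p a j) \<le> (-18/100) * (19/20 * Y)" .
      then show ?thesis using Ypos by simp
    qed
    finally show ?thesis .
  qed
  have pB1: "?M (B1 c) \<le> exp (- 9/5 * L)" if c: "c \<in> {1..m}" for c
  proof -
    have "?M (B1 c) \<le> exp (L - (1 - exp (- 1)) * (\<Sum>j\<in>{m+1..n}. 1 - sec_p a j) / (2 * Y))"
      unfolding B1_def using c by (intro P_B1[OF a0 m2 _ _ _ mn]) (use Ypos in auto)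
    also have "\<dots> \<le> exp (- 9/5 * L)"
    proof -
      have "(\<Sum>j\<in>{m+1..n}. (9/10::real)) \<le> (\<Sum>j\<in>{m+1..n}. 1 - sec_p a j)"
        using C3 by (intro sum_mono) auto
      moreover have "(\<Sum>j\<in>{m+1..n}. (9/10::real)) = 9/10 * real (n - m)" by simp
      ultimately have s1: "9/10 * real (n - m) \<le> (\<Sum>j\<in>{m+1..n}. 1 - sec_p a j)" by simp
      have s2: "9 * L * Y \<le> (\<Sum>j\<in>{m+1..n}. 1 - sec_p a j)" using s1 C4 by simp
      have e: "63/100 \<le> 1 - exp (- 1::real)" using exp_m1_le by simp
      have "63/100 * (9 * L * Y) \<le> (1 - exp (- 1)) * (\<Sum>j\<in>{m+1..n}. 1 - sec_p a j)"
        using e s2 Lpos Ypos by (intro mult_mono) auto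
      then have "63/100 * (9 * L * Y) / (2 * Y) \<le> (1 - exp (- 1)) * (\<Sum>j\<in>{m+1..n}. 1 - sec_p a j) / (2 * Y)"
        using Ypos by (intro divide_right_mono) auto
      moreover have "63/100 * (9 * L * Y) / (2 * Y) = 567/200 * L" using Ypos by simp
      ultimately have "567/200 * L \<le> (1 - exp (- 1)) * (\<Sum>j\<in>{m+1..n}. 1 - sec_p a j) / (2 * Y)" by simp
      then show ?thesis using Lpos by simp
    qed
    finally show ?thesis .
  qed
  have pB2: "?M (B2 c) \<le> exp (1 - 9/2 * L)" if c: "c \<in> {m+1..n}" for c
  proof -
    have "?M (B2 c) \<le> exp (1 + (exp 1 - 1) * real (n - m) / (3/4 * Y) - 30 * L)"
      unfolding B2_def using c by (intro P_B2[OF a0 m2 _ _ mn]) (use Ypos in auto)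
    also have "\<dots> \<le> exp (1 - 9/2 * L)"
    proof -
      have e: "exp 1 - 1 \<le> (172/100::real)" using e_lt by simp
      have "(exp 1 - 1) * real (n - m) \<le> 172/100 * (11 * L * Y)"
        using e C5 by (intro mult_mono) auto
      then have "(exp 1 - 1) * real (n - m) / (3/4 * Y) \<le> 172/100 * (11 * L * Y) / (3/4 * Y)"
        using Ypos by (intro divide_right_mono) auto
      moreover have "172/100 * (11 * L * Y) / (3/4 * Y) = 7568/300 * L" using Ypos by simp
      ultimately have "(exp 1 - 1) * real (n - m) / (3/4 * Y) \<le> 7568/300 * L" by simp
      then show ?thesis using Lpos by simp
    qed
    finally show ?thesis .
  qed
  have "?M (- ?G) \<le> ?M (((A1 \<union> A2) \<union> (\<Union>c\<in>{1..m}. B1 c)) \<union> (\<Union>c\<in>{m+1..n}. B2 c))"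
    using sub by (intro measure_pmf.finite_measure_mono) auto
  also have "\<dots> \<le> ?M ((A1 \<union> A2) \<union> (\<Union>c\<in>{1..m}. B1 c)) + ?M (\<Union>c\<in>{m+1..n}. B2 c)"
    by (rule measure_Un_le) auto
  also have "\<dots> \<le> (?M A1 + ?M A2 + ?M (\<Union>c\<in>{1..m}. B1 c)) + ?M (\<Union>c\<in>{m+1..n}. B2 c)"
  proof -
    have "?M ((A1 \<union> A2) \<union> (\<Union>c\<in>{1..m}. B1 c)) \<le> ?M (A1 \<union> A2) + ?M (\<Union>c\<in>{1..m}. B1 c)"
      by (rule measure_Un_le) auto
    moreover have "?M (A1 \<union> A2) \<le> ?M A1 + ?M A2"
      by (rule measure_Un_le) auto
    ultimately show ?thesis by simp
  qed
  also have "\<dots> \<le> (exp (1 - Y/5) + exp (- Y/50) + real n * exp (- 9/5 * L)) + real n * exp (1 - 9/2 * L)"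
  proof -
    have u1: "?M (\<Union>c\<in>{1..m}. B1 c) \<le> real n * exp (- 9/5 * L)"
    proof -
      have "?M (\<Union>c\<in>{1..m}. B1 c) \<le> (\<Sum>c\<in>{1..m}. ?M (B1 c))"
        by (rule measure_pmf.finite_measure_subadditive_finite) auto
      also have "\<dots> \<le> (\<Sum>c\<in>{1..m}. exp (- 9/5 * L))" using pB1 by (intro sum_mono) auto
      also have "\<dots> = real m * exp (- 9/5 * L)" by simp
      also have "\<dots> \<le> real n * exp (- 9/5 * L)" using mn by (intro mult_right_mono) auto
      finally show ?thesis .
    qed
    have u2: "?M (\<Union>c\<in>{m+1..n}. B2 c) \<le> real n * exp (1 - 9/2 * L)"
    proof -
      have "?M (\<Union>c\<in>{m+1..n}. B2 c) \<le> (\<Sum>c\<in>{m+1..n}. ?M (B2 c))"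
        by (rule measure_pmf.finite_measure_subadditive_finite) auto
      also have "\<dots> \<le> (\<Sum>c\<in>{m+1..n}. exp (1 - 9/2 * L))" using pB2 by (intro sum_mono) auto
      also have "\<dots> = real (n - m) * exp (1 - 9/2 * L)" by simp
      also have "\<dots> \<le> real n * exp (1 - 9/2 * L)" by (intro mult_right_mono) auto
      finally show ?thesis .
    qed
    show ?thesis using pA1 pA2 u1 u2 by linarith
  qed
  finally show ?thesis by simp
qed




lemma conds:
  fixes n :: nat and a :: real
  defines "L \<equiv> ln (real n)" and "Y \<equiv> real n * ln (real n) powr (-a)"
    and "m \<equiv> nat \<lfloor>T2 a n\<rfloor>" and "\<theta> \<equiv> (21/20::real) powr (-1/a)"
  assumes a: "a > 1" and n: "n \<ge> 200" and dl: "delta1 a n \<le> 1/40" and L1: "L \<ge> 1" and Y1: "Y \<ge> 1"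
    and half: "ln (real n / 2) powr (-a) < 1/10" and th: "real n powr \<theta> / Y < 3/20"
  shows "m \<ge> 2" "m \<le> n" "(\<Sum>j\<in>{3..n}. sec_p a j) \<le> 6/5 * Y"
    "real m - 2 \<ge> 19/20 * real n"
    "\<And>j. m+1 \<le> j \<Longrightarrow> j \<le> n \<Longrightarrow> sec_p a j \<le> 1/10"
    "real (n - m) \<ge> 10 * L * Y" "real (n - m) \<le> 11 * L * Y"
    "\<And>c::nat. real c \<le> T2 a n \<longleftrightarrow> c \<le> m"
proof -
  have Lpos: "L > 0" using L1 by simp
  have d0: "0 \<le> delta1 a n" by (simp add: delta1_def)
  have "delta1 a n * real n \<le> 1/40 * real n" by (rule mult_right_mono[OF dl]) simp
  then have T2ge: "T2 a n \<ge> 39/40 * real n" by (simp add: T2_def algebra_simps)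
  have T2le: "T2 a n \<le> real n" using d0 by (simp add: T2_def algebra_simps)
  have T2pos: "T2 a n \<ge> 0" using T2ge by simp
  have mT: "real m \<le> T2 a n" "T2 a n < real m + 1"
    using T2pos by (simp_all add: m_def)
  have key: "delta1 a n * real n = 10 * L * Y"
  proof -
    have "L powr (a - 1) * (L * L powr (-a)) = 1"
    proof -
      have "L * L powr (-a) = L powr 1 * L powr (-a)" using Lpos by simp
      also have "\<dots> = L powr (1 - a)" by (simp only: diff_conv_add_uminus powr_add)
      finally have "L powr (a - 1) * (L * L powr (-a)) = L powr (a - 1) * L powr (1 - a)" by simp
      also have "\<dots> = 1" using Lpos by (simp add: powr_add[symmetric])
      finally show ?thesis .
    qed
    then have "1 / L powr (a - 1) = L * L powr (-a)" using Lpos by (simp add: field_simps)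
    then have d: "delta1 a n = 10 * (L * L powr (-a))" by (simp add: delta1_def L_def)
    show ?thesis unfolding d Y_def L_def by (simp add: algebra_simps)
  qed
  show C2: "real m - 2 \<ge> 19/20 * real n" using mT T2ge n by simp
  then show "m \<ge> 2" by simp
  show "m \<le> n" using mT T2le by simp
  show "real (n - m) \<ge> 10 * L * Y"
  proof -
    have "m \<le> n" using mT T2le by simp
    then have "real (n - m) = real n - real m" by simp
    also have "\<dots> \<ge> real n - T2 a n" using mT by simp
    moreover have "real n - T2 a n = delta1 a n * real n" by (simp add: T2_def algebra_simps)
    ultimately show ?thesis using key by simp
  qed
  show "real (n - m) \<le> 11 * L * Y"
  proof -
    have "m \<le> n" using mT T2le by simp
    then have "real (n - m) = real n - real m" by simp
    also have "\<dots> < real n - T2 a n + 1" using mT by simp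
    also have "real n - T2 a n = delta1 a n * real n" by (simp add: T2_def algebra_simps)
    also have "1 * 1 \<le> L * Y" by (rule mult_mono) (use L1 Y1 in auto)
    ultimately show ?thesis using key by simp
  qed
  show "\<And>j. m+1 \<le> j \<Longrightarrow> j \<le> n \<Longrightarrow> sec_p a j \<le> 1/10"
  proof -
    fix j assume j: "m+1 \<le> j" "j \<le> n"
    have "real n / 2 \<le> real j" using j mT T2ge by simp
    moreover have "1 < real n / 2" using n by simp
    ultimately have "ln (real n / 2) \<le> ln (real j)" "0 < ln (real n / 2)" by auto
    then have "ln (real j) powr (-a) \<le> ln (real n / 2) powr (-a)"
      using a by (intro powr_mono2') auto
    then show "sec_p a j \<le> 1/10" using half by (simp add: sec_p_def)
  qed
  show "\<And>c::nat. real c \<le> T2 a n \<longleftrightarrow> c \<le> m"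
  proof -
    fix c :: nat
    have "real c \<le> T2 a n \<longleftrightarrow> int c \<le> \<lfloor>T2 a n\<rfloor>" by (simp add: le_floor_iff)
    also have "\<dots> \<longleftrightarrow> c \<le> m"
    proof -
      have "0 \<le> \<lfloor>T2 a n\<rfloor>" using T2pos by simp
      then show ?thesis by (simp add: m_def le_nat_iff)
    qed
    finally show "real c \<le> T2 a n \<longleftrightarrow> c \<le> m" .
  qed
  show "(\<Sum>j\<in>{3..n}. sec_p a j) \<le> 6/5 * Y"
  proof -
    have a0: "a > 0" using a by simp
    have t0: "0 < \<theta>" by (simp add: \<theta>_def)
    have t1: "\<theta> < 1" unfolding \<theta>_def using a0 by (intro powr_less_one) auto
    have tp: "\<theta> powr (-a) = 21/20" unfolding \<theta>_def using a0 by (simp add: powr_powr)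
    have "(\<Sum>j\<in>{3..n}. sec_p a j) \<le> real n powr \<theta> + \<theta> powr (-a) * Y"
      unfolding Y_def using S_upper[OF a0 t0 t1, of n] n by simp
    moreover have "real n powr \<theta> < 3/20 * Y" using th Y1 by (simp add: divide_less_eq)
    ultimately show ?thesis using tp by simp
  qed
qed

lemma prob_eq:
  "measure_pmf.prob (sec_model a d n) (lemma4_event a n) =
   measure_pmf.prob (colmodel a n) {col. (\<forall>c\<in>seeds n col. real c \<le> T2 a n \<longrightarrow> ln (real n) \<le> real (X n c col)) \<and>
      (\<forall>c\<in>seeds n col. T2 a n < real c \<longrightarrow> real (X n c col) \<le> 30 * ln (real n))}"
  (is "_ = measure_pmf.prob _ ?S")
proof -
  have "lemma4_event a n = fst -` ?S"
    by (auto simp: lemma4_event_def homochromatic_def X_def)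
  then have "measure_pmf.prob (sec_model a d n) (lemma4_event a n) = measure_pmf.prob (map_pmf fst (sec_model a d n)) ?S"
    by simp
  then show ?thesis by (simp only: marg)
qed

theorem lemma4:
  fixes a :: real and d :: nat
  assumes "a > 1" and "d \<ge> 4"
  shows "(\<lambda>n. measure_pmf.prob (sec_model a d n) (lemma4_event a n)) \<longlonglongrightarrow> 1"
proof -
  have a: "a > 1" by fact
  define \<epsilon> where "\<epsilon> = (\<lambda>n::nat. exp (1 - (real n * ln (real n) powr (-a)) / 5) + exp (- (real n * ln (real n) powr (-a)) / 50)
   + real n * exp (- 9/5 * ln (real n)) + real n * exp (1 - 9/2 * ln (real n)))"
  have eps: "\<epsilon> \<longlonglongrightarrow> 0" unfolding \<epsilon>_def by (rule R_eps[OF a])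
  define \<theta> where "\<theta> = (21/20::real) powr (-1/a)"
  have t0: "0 < \<theta>" by (simp add: \<theta>_def)
  have t1: "\<theta> < 1" unfolding \<theta>_def using a by (intro powr_less_one) auto
  have e1: "eventually (\<lambda>n. n \<ge> (200::nat)) sequentially" by (rule eventually_ge_at_top)
  have e2: "eventually (\<lambda>n. delta1 a n < 1/40) sequentially"
    using order_tendstoD(2)[OF R_delta[OF a], of "1/40"] by (simp add: delta1_def)
  have e3: "eventually (\<lambda>n::nat. 1 \<le> ln (real n)) sequentially"
    using R_L by (simp add: filterlim_at_top)
  have e4: "eventually (\<lambda>n::nat. 1 \<le> real n * ln (real n) powr (-a)) sequentially"
    using R_Y[OF a] by (simp add: filterlim_at_top)
  have e5: "eventually (\<lambda>n::nat. ln (real n / 2) powr (-a) < 1/10) sequentially"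
    using order_tendstoD(2)[OF R_half[OF a], of "1/10"] by simp
  have e6: "eventually (\<lambda>n::nat. real n powr \<theta> / (real n * ln (real n) powr (-a)) < 3/20) sequentially"
    using order_tendstoD(2)[OF R_theta[OF a t0 t1], of "3/20"] by simp
  have lower: "eventually (\<lambda>n. 1 - \<epsilon> n \<le> measure_pmf.prob (sec_model a d n) (lemma4_event a n)) sequentially"
    using e1 e2 e3 e4 e5 e6
  proof eventually_elim
    case (elim n)
    define L where "L = ln (real n)"
    define Y where "Y = real n * ln (real n) powr (-a)"
    define m where "m = nat \<lfloor>T2 a n\<rfloor>"
    note cs = conds[of a n, OF a elim(1) _ elim(3) elim(4) elim(5), folded L_def Y_def m_def \<theta>_def]
    have dl: "delta1 a n \<le> 1/40" using elim(2) by simp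
    note cs = cs[OF dl elim(6)[folded \<theta>_def Y_def]]
    let ?S = "{col. (\<forall>c\<in>seeds n col. real c \<le> T2 a n \<longrightarrow> ln (real n) \<le> real (X n c col)) \<and>
      (\<forall>c\<in>seeds n col. T2 a n < real c \<longrightarrow> real (X n c col) \<le> 30 * ln (real n))}"
    let ?G = "{col. (\<forall>c\<in>seeds n col. c \<le> m \<longrightarrow> L \<le> real (X n c col)) \<and> (\<forall>c\<in>seeds n col. m < c \<longrightarrow> real (X n c col) \<le> 30 * L)}"
    have SG: "?S = ?G"
    proof -
      have "\<And>c::nat. T2 a n < real c \<longleftrightarrow> m < c" using cs(8) by (metis not_le)
      then show ?thesis using cs(8) by (auto simp: L_def)
    qed
    have Lp: "L > 0" using elim(3) L_def by simp
    have Yp: "Y > 0" using elim(4) Y_def by simp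
    have Ydef': "Y = real n * L powr (-a)" by (simp add: Y_def L_def)
    have mb: "measure_pmf.prob (colmodel a n) (- ?G) \<le> \<epsilon> n"
      using main_bound[OF a _ cs(1) cs(2) L_def Ydef' Yp Lp cs(3) cs(4) cs(5) cs(6) cs(7)] elim(1)
      by (simp add: \<epsilon>_def Y_def L_def)
    have "measure_pmf.prob (colmodel a n) (- ?G) = 1 - measure_pmf.prob (colmodel a n) ?G"
      using measure_pmf.prob_compl[of ?G "colmodel a n"] by (simp add: Compl_eq_Diff_UNIV)
    then have "1 - \<epsilon> n \<le> measure_pmf.prob (colmodel a n) ?G" using mb by simp
    then show ?case by (simp only: prob_eq SG)
  qed
  have upper: "eventually (\<lambda>n. measure_pmf.prob (sec_model a d n) (lemma4_event a n) \<le> 1) sequentially"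
    by simp
  have l1: "(\<lambda>n. 1 - \<epsilon> n) \<longlonglongrightarrow> 1" using tendsto_diff[OF tendsto_const eps, of 1] by simp
  show ?thesis by (rule tendsto_sandwich[OF lower upper l1 tendsto_const])
qed


end
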